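(* Let $\mathbf H\subset GL_m(\mathbb C)$ be a finite unitary group with a fixed generating set $X_{\mathbf H}$, and $\mathbf G=\mathbf H\wr\mathrm{Sym}_n$ with the subgroup sequence, coset leaders, initial vector and generating sets $X_k$ of $\mathbf G_k$ described in the context. Then the Error Control Property holds for every consecutive pair $\mathbf G_{k-1}<\mathbf G_k$.
   Context: $\mathbf G$ is the group of $mn\times mn$ block permutation matrices with nonzero blocks in $\mathbf H$; elements written $\sigma(h_1,\dots,h_n)$, $\sigma\in\mathrm{Sym}_n$, $h_i\in\mathbf H$. Subgroups: $\mathbf G_0=\{I\}$, $\mathbf G_{2l-1}=(\mathbf H\wr\mathrm{Sym}_l)\oplus\{I_{m(n-l)}\}$ ($1\le l\le n$), $\mathbf G_{2l}=(\mathbf H\wr\mathrm{Sym}_l)\oplus\mathbf H\oplus\{I_{m(n-l-1)}\}$ ($1\le l\le n-1$). Coset leaders: $\operatorname{CL}(\mathbf G_1/\mathbf G_0)=\mathbf G_1$; $\operatorname{CL}(\mathbf G_{2l}/\mathbf G_{2l-1})=\{(1,\dots,1,h,1,\dots,1):h\in\mathbf H\text{ in slot }l+1\}$; $\operatorname{CL}(\mathbf G_{2l+1}/\mathbf G_{2l})=\{(j\ j{+}1\ \cdots\ l{+}1):1\le j\le l+1\}$. Initial vector $\mathbf x_0=(u_1\mathbf v_0,\dots,u_n\mathbf v_0)$ with $\mathbf v_0\in\mathbb C^m$ a unit vector fixed by no nonidentity element of $\mathbf H$ and real $0<u_1<\cdots<u_n$, $\|\mathbf x_0\|=1$. Generators: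 $X_{2l-1}=\{(h,1,\dots,1):h\in X_{\mathbf H}\}\cup\{(1\,2),(2\,3),\dots,(l{-}1\ l)\}$, $X_{2l}=X_{2l-1}\cup\{(1,\dots,1,h,1,\dots,1):h\in\mathbf H\text{ in slot }l+1\}$, $X_0=\emptyset$. Error Control Property for $H<K$ with coset leaders $\operatorname{CL}(K/H)$ and generating sets $X_H,X_K$: for all $b\in X_K\cup X_K^{-1}$ and $c\in\operatorname{CL}(K/H)$, either $bc\in\operatorname{CL}(K/H)$ or $c^{-1}bc\in X_H\cup X_H^{-1}$ (where $X^{-1}=\{a^{-1}:a\in X\}$). *)

theory Defs
  imports "Jordan_Normal_Form.Schur_Decomposition" "HOL-Combinatorics.Transposition"
    "HOL-Combinatorics.Permutations"
begin

text \<open>Blocks are indexed 0,...,n-1 (the paper uses 1,...,n); within a block, indices 0,...,m-1.\<close>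

definition mat_invs :: "nat \<Rightarrow> complex mat set \<Rightarrow> complex mat set" where
  "mat_invs d X = {b \<in> carrier_mat d d. \<exists>a\<in>X. a * b = 1\<^sub>m d \<and> b * a = 1\<^sub>m d}"

inductive_set mat_gen :: "nat \<Rightarrow> complex mat set \<Rightarrow> complex mat set" for d X where
  one: "1\<^sub>m d \<in> mat_gen d X"
| mult: "a \<in> X \<union> mat_invs d X \<Longrightarrow> b \<in> mat_gen d X \<Longrightarrow> a * b \<in> mat_gen d X"

definition unitary_mat :: "nat \<Rightarrow> complex mat \<Rightarrow> bool" where
  "unitary_mat d A \<longleftrightarrow> A \<in> carrier_mat d d \<and> A * mat_adjoint A = 1\<^sub>m d"

definition finite_unitary_group :: "nat \<Rightarrow> complex mat set \<Rightarrow> bool" where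
  "finite_unitary_group m H \<longleftrightarrow> finite H \<and> 1\<^sub>m m \<in> H \<and> (\<forall>A\<in>H. unitary_mat m A)
     \<and> (\<forall>A\<in>H. \<forall>B\<in>H. A * B \<in> H) \<and> mat_invs m H \<subseteq> H"

text \<open>Block permutation matrix of sigma (permutation of the block indices 0..n-1):
  the identity block sits in block row sigma(j), block column j, so that
  bperm (sigma o tau) = bperm sigma * bperm tau.\<close>
definition bperm :: "nat \<Rightarrow> nat \<Rightarrow> (nat \<Rightarrow> nat) \<Rightarrow> complex mat" where
  "bperm m n \<sigma> = mat (m*n) (m*n) (\<lambda>(i,j). if i div m = \<sigma> (j div m) \<and> i mod m = j mod m then 1 else 0)"

definition bdiag :: "nat \<Rightarrow> nat \<Rightarrow> (nat \<Rightarrow> complex mat) \<Rightarrow> complex mat" where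
  "bdiag m n h = mat (m*n) (m*n) (\<lambda>(i,j). if i div m = j div m then h (i div m) $$ (i mod m, j mod m) else 0)"

definition wr_elem :: "nat \<Rightarrow> nat \<Rightarrow> (nat \<Rightarrow> nat) \<Rightarrow> (nat \<Rightarrow> complex mat) \<Rightarrow> complex mat" where
  "wr_elem m n \<sigma> h = bperm m n \<sigma> * bdiag m n h"

definition slot_elem :: "nat \<Rightarrow> nat \<Rightarrow> nat \<Rightarrow> complex mat \<Rightarrow> complex mat" where
  "slot_elem m n s h = wr_elem m n id (\<lambda>i. if i = s then h else 1\<^sub>m m)"

definition perm_elem :: "nat \<Rightarrow> nat \<Rightarrow> (nat \<Rightarrow> nat) \<Rightarrow> complex mat" where
  "perm_elem m n \<sigma> = wr_elem m n \<sigma> (\<lambda>_. 1\<^sub>m m)"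

definition cyc :: "nat \<Rightarrow> nat \<Rightarrow> nat \<Rightarrow> nat" where
  "cyc a b k = (if a \<le> k \<and> k < b then k + 1 else if k = b then a else k)"

definition Gsub :: "nat \<Rightarrow> nat \<Rightarrow> complex mat set \<Rightarrow> nat \<Rightarrow> complex mat set" where
  "Gsub m n H k = (if k = 0 then {1\<^sub>m (m*n)}
     else {wr_elem m n \<sigma> h | \<sigma> h. \<sigma> permutes {..<(k+1) div 2} \<and>
            (\<forall>i<n. if i < (k+1) div 2 \<or> (even k \<and> i = k div 2) then h i \<in> H else h i = 1\<^sub>m m)})"

text \<open>Generating sets X_k (paper's X_{2l-1}, X_{2l}; X_0 = {}).
  Paper's transposition (i i+1), 1 \<le> i \<le> l-1, is transpose (i-1) i here;
  paper's slot l+1 is 0-based slot l.\<close>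
definition Xgen :: "nat \<Rightarrow> nat \<Rightarrow> complex mat set \<Rightarrow> nat \<Rightarrow> complex mat set" where
  "Xgen m n XH k = (if k = 0 then {} else
     let l = (k + 1) div 2 in
       {slot_elem m n 0 h | h. h \<in> XH}
       \<union> {perm_elem m n (transpose (i - 1) i) | i. 1 \<le> i \<and> i \<le> l - 1})"

definition Xgen_full :: "nat \<Rightarrow> nat \<Rightarrow> complex mat set \<Rightarrow> complex mat set \<Rightarrow> nat \<Rightarrow> complex mat set" where
  "Xgen_full m n H XH k = (if k = 0 \<or> odd k then Xgen m n XH k
     else Xgen m n XH k \<union> {slot_elem m n (k div 2) h | h. h \<in> H})"

text \<open>Coset leaders CL(G_k / G_{k-1}), k \<ge> 1.
  k = 1: G_1; k = 2l: (1,..,h,..,1) with h in paper slot l+1;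
  k = 2l+1: cycles (j j+1 ... l+1), 1 \<le> j \<le> l+1 (0-based: cyc (j-1) l).\<close>
definition CLset :: "nat \<Rightarrow> nat \<Rightarrow> complex mat set \<Rightarrow> nat \<Rightarrow> complex mat set" where
  "CLset m n H k = (if k = 1 then Gsub m n H 1
     else if even k then {slot_elem m n (k div 2) h | h. h \<in> H}
     else {perm_elem m n (cyc j (k div 2)) | j. j \<le> k div 2})"

definition ECP :: "nat \<Rightarrow> complex mat set \<Rightarrow> complex mat set \<Rightarrow> complex mat set \<Rightarrow> bool" where
  "ECP d CL XH XK \<longleftrightarrow> (\<forall>b \<in> XK \<union> mat_invs d XK. \<forall>c \<in> CL.
      b * c \<in> CL \<or> (\<exists>ci \<in> mat_invs d {c}. ci * b * c \<in> XH \<union> mat_invs d XH))"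

end

theory Submission
  imports Defs
begin


lemma blk_divmod: assumes "a*m \<le> (k::nat)" "k < a*m+m" shows "k div m = a" "k mod m = k - a*m"
proof -
  obtain r where r: "k = a*m + r" "r < m" using assms by (metis add_less_cancel_left le_add_diff_inverse)
  show "k div m = a" "k mod m = k - a*m" using r by auto
qed

lemma sum_blocks: "(\<Sum>k<(m::nat)*n. F (k div m) (k mod m)) = (\<Sum>a<n. \<Sum>r<m. F a r :: 'b::comm_monoid_add)"
proof -
  have "(\<Sum>k<m*n. F (k div m) (k mod m)) = (\<Sum>a<n. \<Sum>k\<in>{a*m..<a*m+m}. F (k div m) (k mod m))"
    using sum.nat_group[of "\<lambda>k. F (k div m) (k mod m)" m n] by (simp add: mult.commute)
  also have "\<dots> = (\<Sum>a<n. \<Sum>r<m. F a r)"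
  proof (rule sum.cong[OF refl])
    fix a
    show "(\<Sum>k\<in>{a*m..<a*m+m}. F (k div m) (k mod m)) = (\<Sum>r<m. F a r)"
      by (rule sum.reindex_bij_witness[of _ "\<lambda>r. a*m+r" "\<lambda>k. k - a*m"]) (auto simp: blk_divmod)
  qed
  finally show ?thesis .
qed

lemma idx_lt: "i < m*n \<Longrightarrow> i div m < (n::nat)" 
  by (simp add: less_mult_imp_div_less mult.commute)
lemma idx_mod: "i < m*n \<Longrightarrow> i mod m < (m::nat)" 
  by (cases "m = 0") auto
lemma idx_eq: "(i::nat) = j \<longleftrightarrow> i div m = j div m \<and> i mod m = j mod m"
  by (metis div_mult_mod_eq)

lemma bperm_carrier[simp]: "bperm m n s \<in> carrier_mat (m*n) (m*n)" by (simp add: bperm_def)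
lemma bdiag_carrier[simp]: "bdiag m n h \<in> carrier_mat (m*n) (m*n)" by (simp add: bdiag_def)
lemma wr_carrier[simp]: "wr_elem m n s h \<in> carrier_mat (m*n) (m*n)"
  unfolding wr_elem_def by (rule mult_carrier_mat[OF bperm_carrier bdiag_carrier])

lemma prod_entry: "A \<in> carrier_mat N N \<Longrightarrow> B \<in> carrier_mat N N \<Longrightarrow> i < N \<Longrightarrow> j < N \<Longrightarrow>
  (A*B)$$(i,j) = (\<Sum>k<N. A$$(i,k) * B$$(k,j))"
  by (auto simp: scalar_prod_def atLeast0LessThan intro!: sum.cong)

lemma sum2_delta: "(a0::nat) < n \<Longrightarrow> r0 < m \<Longrightarrow>
  (\<Sum>a<n. \<Sum>r<(m::nat). if a = a0 \<and> r = r0 then G a r else (0::'b::comm_monoid_add)) = G a0 r0"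
proof -
  assume "a0 < n" "r0 < m"
  have "(\<Sum>a<n. \<Sum>r<(m::nat). if a = a0 \<and> r = r0 then G a r else 0) = (\<Sum>a<n. if a = a0 then G a r0 else 0)"
    by (rule sum.cong[OF refl]) (use \<open>r0 < m\<close> in auto)
  also have "\<dots> = G a0 r0" using \<open>a0 < n\<close> by (subst sum.delta) auto
  finally show ?thesis .
qed

lemma sum2_delta1: "(a0::nat) < n \<Longrightarrow>
  (\<Sum>a<n. \<Sum>r<(m::nat). if a = a0 then G a r else (0::'b::comm_monoid_add)) = (\<Sum>r<m. G a0 r)"
proof -
  assume "a0 < n"
  have "(\<Sum>a<n. \<Sum>r<(m::nat). if a = a0 then G a r else 0) = (\<Sum>a<n. if a = a0 then (\<Sum>r<m. G a r) else 0)"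
    by (rule sum.cong[OF refl]) auto
  also have "\<dots> = (\<Sum>r<m. G a0 r)" using \<open>a0 < n\<close> by (subst sum.delta) auto
  finally show ?thesis .
qed

lemma bperm_mult:
  assumes t: "\<forall>x<n. \<tau> x < n"
  shows "bperm m n \<sigma> * bperm m n \<tau> = bperm m n (\<sigma> \<circ> \<tau>)"
proof (rule eq_matI)
  fix i j assume "i < dim_row (bperm m n (\<sigma> \<circ> \<tau>))" "j < dim_col (bperm m n (\<sigma> \<circ> \<tau>))"
  hence i: "i < m*n" and j: "j < m*n" by (auto simp: bperm_def)
  have jd: "j div m < n" "j mod m < m" using j by (auto simp: idx_lt idx_mod)
  hence tj: "\<tau> (j div m) < n" using t by auto
  define F where "F = (\<lambda>a r. if a = \<tau> (j div m) \<and> r = j mod m then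
     (if i div m = \<sigma> a \<and> i mod m = r then 1 else 0) else (0::complex))"
  have "(bperm m n \<sigma> * bperm m n \<tau>) $$ (i,j) = (\<Sum>k<m*n. F (k div m) (k mod m))"
    unfolding prod_entry[OF bperm_carrier bperm_carrier i j]
    using i j by (auto simp: bperm_def F_def intro!: sum.cong dest: idx_lt idx_mod)
  also have "\<dots> = (\<Sum>a<n. \<Sum>r<m. F a r)" by (rule sum_blocks)
  also have "\<dots> = (if i div m = \<sigma> (\<tau> (j div m)) \<and> i mod m = j mod m then 1 else 0)"
    unfolding F_def by (subst sum2_delta) (use tj jd in auto)
  also have "\<dots> = bperm m n (\<sigma> \<circ> \<tau>) $$ (i,j)" using i j by (simp add: bperm_def)
  finally show "(bperm m n \<sigma> * bperm m n \<tau>) $$ (i,j) = bperm m n (\<sigma> \<circ> \<tau>) $$ (i,j)" .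
qed (auto simp: bperm_def)

lemma bdiag_mult:
  assumes c: "\<forall>x<n. h x \<in> carrier_mat m m \<and> g x \<in> carrier_mat m m"
  shows "bdiag m n h * bdiag m n g = bdiag m n (\<lambda>x. h x * g x)"
proof (rule eq_matI)
  fix i j assume "i < dim_row (bdiag m n (\<lambda>x. h x * g x))" "j < dim_col (bdiag m n (\<lambda>x. h x * g x))"
  hence i: "i < m*n" and j: "j < m*n" by (auto simp: bdiag_def)
  have id: "i div m < n" "i mod m < m" using i by (auto simp: idx_lt idx_mod)
  have jd: "j div m < n" "j mod m < m" using j by (auto simp: idx_lt idx_mod)
  define F where "F = (\<lambda>a r. if a = i div m then
     (if a = j div m then h a $$ (i mod m, r) * g a $$ (r, j mod m) else 0) else (0::complex))"
  have "(bdiag m n h * bdiag m n g) $$ (i,j) = (\<Sum>k<m*n. F (k div m) (k mod m))"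
    unfolding prod_entry[OF bdiag_carrier bdiag_carrier i j]
    using i j by (auto simp: bdiag_def F_def intro!: sum.cong dest: idx_lt idx_mod)
  also have "\<dots> = (\<Sum>a<n. \<Sum>r<m. F a r)" by (rule sum_blocks)
  also have "\<dots> = (\<Sum>r<m. if i div m = j div m then h (i div m) $$ (i mod m, r) * g (i div m) $$ (r, j mod m) else 0)"
    unfolding F_def by (subst sum2_delta1) (use id in auto)
  also have "\<dots> = bdiag m n (\<lambda>x. h x * g x) $$ (i,j)"
    using i j id jd c by (auto simp: bdiag_def prod_entry[of _ m] intro!: sum.cong)
  finally show "(bdiag m n h * bdiag m n g) $$ (i,j) = bdiag m n (\<lambda>x. h x * g x) $$ (i,j)" .
qed (auto simp: bdiag_def)

lemma bdiag_perm:
  assumes t: "\<forall>x<n. \<sigma> x < n"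
  shows "bdiag m n h * bperm m n \<sigma> = bperm m n \<sigma> * bdiag m n (h \<circ> \<sigma>)"
proof (rule eq_matI)
  fix i j assume "i < dim_row (bperm m n \<sigma> * bdiag m n (h \<circ> \<sigma>))" "j < dim_col (bperm m n \<sigma> * bdiag m n (h \<circ> \<sigma>))"
  hence i: "i < m*n" and j: "j < m*n" by (auto simp: bdiag_def bperm_def)
  have id: "i div m < n" "i mod m < m" using i by (auto simp: idx_lt idx_mod)
  have jd: "j div m < n" "j mod m < m" using j by (auto simp: idx_lt idx_mod)
  hence tj: "\<sigma> (j div m) < n" using t by auto
  define F where "F = (\<lambda>a r. if a = \<sigma> (j div m) \<and> r = j mod m then
     (if i div m = a then h a $$ (i mod m, r) else 0) else (0::complex))"
  have "(bdiag m n h * bperm m n \<sigma>) $$ (i,j) = (\<Sum>k<m*n. F (k div m) (k mod m))"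
    unfolding prod_entry[OF bdiag_carrier bperm_carrier i j]
    using i j by (auto simp: bdiag_def bperm_def F_def intro!: sum.cong dest: idx_lt idx_mod)
  also have "\<dots> = (\<Sum>a<n. \<Sum>r<m. F a r)" by (rule sum_blocks)
  also have "\<dots> = (if i div m = \<sigma> (j div m) then h (\<sigma> (j div m)) $$ (i mod m, j mod m) else 0)"
    unfolding F_def by (subst sum2_delta) (use tj jd in auto)
  finally have L: "(bdiag m n h * bperm m n \<sigma>) $$ (i,j) = (if i div m = \<sigma> (j div m) then h (\<sigma> (j div m)) $$ (i mod m, j mod m) else 0)" .
  define G where "G = (\<lambda>a r. if a = j div m \<and> r = i mod m then
     (if i div m = \<sigma> a then h (\<sigma> a) $$ (r, j mod m) else 0) else (0::complex))"
  have "(bperm m n \<sigma> * bdiag m n (h \<circ> \<sigma>)) $$ (i,j) = (\<Sum>k<m*n. G (k div m) (k mod m))"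
    unfolding prod_entry[OF bperm_carrier bdiag_carrier i j]
    using i j by (auto simp: bdiag_def bperm_def G_def intro!: sum.cong dest: idx_lt idx_mod)
  also have "\<dots> = (\<Sum>a<n. \<Sum>r<m. G a r)" by (rule sum_blocks)
  also have "\<dots> = (if i div m = \<sigma> (j div m) then h (\<sigma> (j div m)) $$ (i mod m, j mod m) else 0)"
    unfolding G_def by (subst sum2_delta) (use id jd in auto)
  finally show "(bdiag m n h * bperm m n \<sigma>) $$ (i,j) = (bperm m n \<sigma> * bdiag m n (h \<circ> \<sigma>)) $$ (i,j)"
    using L by simp
qed (auto simp: bdiag_def bperm_def)

lemma bperm_cong: "\<forall>x<n. \<sigma> x = \<tau> x \<Longrightarrow> bperm m n \<sigma> = bperm m n \<tau>"
  unfolding bperm_def by (rule eq_matI) (auto dest!: idx_lt)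

lemma bdiag_cong: "\<forall>x<n. h x = g x \<Longrightarrow> bdiag m n h = bdiag m n g"
  unfolding bdiag_def by (rule eq_matI) (auto dest!: idx_lt)

lemma bperm_id: "bperm m n id = 1\<^sub>m (m*n)"
proof (rule eq_matI)
  fix i j assume "i < dim_row (1\<^sub>m (m*n))" "j < dim_col (1\<^sub>m (m*n))"
  then show "bperm m n id $$ (i,j) = 1\<^sub>m (m*n) $$ (i,j)"
    using idx_eq[of i j m] by (auto simp: bperm_def)
qed (auto simp: bperm_def)

lemma bdiag_one: "bdiag m n (\<lambda>_. 1\<^sub>m m) = 1\<^sub>m (m*n)"
proof (rule eq_matI)
  fix i j assume "i < dim_row (1\<^sub>m (m*n))" "j < dim_col (1\<^sub>m (m*n))"
  then show "bdiag m n (\<lambda>_. 1\<^sub>m m) $$ (i,j) = 1\<^sub>m (m*n) $$ (i,j)"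
    using idx_eq[of i j m] idx_mod[of i m n] idx_mod[of j m n] by (auto simp: bdiag_def)
qed (auto simp: bdiag_def)

lemma wr_mult:
  assumes t: "\<forall>x<n. \<tau> x < n" and hc: "\<forall>x<n. h x \<in> carrier_mat m m" and gc: "\<forall>x<n. g x \<in> carrier_mat m m"
  shows "wr_elem m n \<sigma> h * wr_elem m n \<tau> g = wr_elem m n (\<sigma> \<circ> \<tau>) (\<lambda>x. h (\<tau> x) * g x)"
proof -
  let ?P = "bperm m n" and ?D = "bdiag m n" and ?N = "m*n"
  have "wr_elem m n \<sigma> h * wr_elem m n \<tau> g = ?P \<sigma> * (?D h * (?P \<tau> * ?D g))"
    unfolding wr_elem_def by (rule assoc_mult_mat[of _ ?N ?N _ ?N _ ?N]) (auto intro: mult_carrier_mat[OF bperm_carrier bdiag_carrier])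
  also have "?D h * (?P \<tau> * ?D g) = (?D h * ?P \<tau>) * ?D g"
    by (rule assoc_mult_mat[of _ ?N ?N _ ?N _ ?N, symmetric]) auto
  also have "?D h * ?P \<tau> = ?P \<tau> * ?D (h \<circ> \<tau>)" by (rule bdiag_perm[OF t])
  also have "(?P \<tau> * ?D (h \<circ> \<tau>)) * ?D g = ?P \<tau> * (?D (h \<circ> \<tau>) * ?D g)"
    by (rule assoc_mult_mat[of _ ?N ?N _ ?N _ ?N]) auto
  also have "?D (h \<circ> \<tau>) * ?D g = ?D (\<lambda>x. h (\<tau> x) * g x)"
    using bdiag_mult[of n "h \<circ> \<tau>" m g] t hc gc by auto
  also have "?P \<sigma> * (?P \<tau> * ?D (\<lambda>x. h (\<tau> x) * g x)) = (?P \<sigma> * ?P \<tau>) * ?D (\<lambda>x. h (\<tau> x) * g x)"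
    by (rule assoc_mult_mat[of _ ?N ?N _ ?N _ ?N, symmetric]) auto
  also have "?P \<sigma> * ?P \<tau> = ?P (\<sigma> \<circ> \<tau>)" by (rule bperm_mult[OF t])
  finally show ?thesis unfolding wr_elem_def .
qed

lemma wr_cong: "\<forall>x<n. \<sigma> x = \<tau> x \<Longrightarrow> \<forall>x<n. h x = g x \<Longrightarrow> wr_elem m n \<sigma> h = wr_elem m n \<tau> g"
  unfolding wr_elem_def using bperm_cong bdiag_cong by metis

lemma wr_one: "wr_elem m n id (\<lambda>_. 1\<^sub>m m) = 1\<^sub>m (m*n)"
  unfolding wr_elem_def bperm_id bdiag_one by simp

lemma wr3:
  assumes t2: "\<forall>x<n. \<sigma>2 x < n" and t3: "\<forall>x<n. \<sigma>3 x < n"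
   and c1: "\<forall>x<n. h1 x \<in> carrier_mat m m" and c2: "\<forall>x<n. h2 x \<in> carrier_mat m m"
   and c3: "\<forall>x<n. h3 x \<in> carrier_mat m m"
  shows "wr_elem m n \<sigma>1 h1 * wr_elem m n \<sigma>2 h2 * wr_elem m n \<sigma>3 h3 =
     wr_elem m n (\<sigma>1 \<circ> \<sigma>2 \<circ> \<sigma>3) (\<lambda>x. h1 (\<sigma>2 (\<sigma>3 x)) * h2 (\<sigma>3 x) * h3 x)"
proof -
  have "wr_elem m n \<sigma>1 h1 * wr_elem m n \<sigma>2 h2 = wr_elem m n (\<sigma>1 \<circ> \<sigma>2) (\<lambda>x. h1 (\<sigma>2 x) * h2 x)"
    by (rule wr_mult[OF t2 c1 c2])
  moreover have "\<forall>x<n. h1 (\<sigma>2 x) * h2 x \<in> carrier_mat m m" using t2 c1 c2 by auto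
  ultimately show ?thesis using wr_mult[OF t3 _ c3] by simp
qed

lemma invs_unique:
  assumes "A \<in> carrier_mat d d" "A' \<in> carrier_mat d d" "A * A' = 1\<^sub>m d" "A' * A = 1\<^sub>m d"
    and "B \<in> mat_invs d {A}"
  shows "B = A'"
proof -
  have B: "B \<in> carrier_mat d d" "A * B = 1\<^sub>m d" "B * A = 1\<^sub>m d" using assms(5) by (auto simp: mat_invs_def)
  have "B = B * (A * A')" using B assms by simp
  also have "\<dots> = (B * A) * A'" by (rule assoc_mult_mat[symmetric, OF B(1) assms(1) assms(2)])
  also have "\<dots> = A'" using B assms by simp
  finally show ?thesis .
qed

lemma invsI: "A' \<in> carrier_mat d d \<Longrightarrow> A * A' = 1\<^sub>m d \<Longrightarrow> A' * A = 1\<^sub>m d \<Longrightarrow> A \<in> X \<Longrightarrow> A' \<in> mat_invs d X"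
  unfolding mat_invs_def by auto

lemma invs_mono: "X \<subseteq> Y \<Longrightarrow> mat_invs d X \<subseteq> mat_invs d Y"
  unfolding mat_invs_def by auto

lemma invs_Un: "mat_invs d (X \<union> Y) = mat_invs d X \<union> mat_invs d Y"
  unfolding mat_invs_def by auto

lemma invs_empty[simp]: "mat_invs d {} = {}"
  unfolding mat_invs_def by auto

definition cycinv :: "nat \<Rightarrow> nat \<Rightarrow> nat \<Rightarrow> nat" where
  "cycinv a b k = (if a < k \<and> k \<le> b then k - 1 else if k = a then b else k)"

lemma cyc_lt: "l < n \<Longrightarrow> j \<le> l \<Longrightarrow> x < n \<Longrightarrow> cyc j l x < n" unfolding cyc_def by auto
lemma cycinv_lt: "l < n \<Longrightarrow> j \<le> l \<Longrightarrow> x < n \<Longrightarrow> cycinv j l x < n" unfolding cycinv_def by auto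
lemma cycinv_cyc: "j \<le> l \<Longrightarrow> cycinv j l (cyc j l x) = x" unfolding cyc_def cycinv_def by auto
lemma cyc_cycinv: "j \<le> l \<Longrightarrow> cyc j l (cycinv j l x) = x" unfolding cyc_def cycinv_def by auto
lemma pt_0: "1 \<le> l \<Longrightarrow> cyc 0 l x = 0 \<longleftrightarrow> x = l"
  unfolding cyc_def by auto
lemma pt_0j: "1 \<le> j \<Longrightarrow> j \<le> l \<Longrightarrow> cyc j l x = 0 \<longleftrightarrow> x = 0"
  unfolding cyc_def by auto
lemma pt_jj: "1 \<le> j \<Longrightarrow> j \<le> l \<Longrightarrow> transpose (j-1) j (cyc j l x) = cyc (j-1) l x"
  unfolding cyc_def by (cases "x < j - 1"; cases "x = j - 1"; cases "x < l"; cases "x = l"; simp add: transpose_def)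
lemma pt_j1: "j + 1 \<le> l \<Longrightarrow> transpose j (j+1) (cyc j l x) = cyc (j+1) l x"
  unfolding cyc_def by (cases "x < j"; cases "x = j"; cases "x = j+1"; cases "x < l"; cases "x = l"; simp add: transpose_def)
lemma pt_lt: "1 \<le> i \<Longrightarrow> i < j \<Longrightarrow> j \<le> l \<Longrightarrow> cycinv j l (transpose (i-1) i (cyc j l x)) = transpose (i-1) i x"
  unfolding cyc_def cycinv_def by (cases "x < i-1"; cases "x = i-1"; cases "x = i"; cases "x < j"; cases "x < l"; cases "x = l"; simp add: transpose_def)
lemma pt_gt: "j + 2 \<le> i \<Longrightarrow> i \<le> l \<Longrightarrow> cycinv j l (transpose (i-1) i (cyc j l x)) = transpose (i-2) (i-1) x"
  unfolding cyc_def cycinv_def by (cases "x < j"; cases "x = i-2"; cases "x = i - 1"; cases "x = i"; cases "x < l"; cases "x = l"; simp add: transpose_def; arith)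


lemma slot_mult:
  assumes "h \<in> carrier_mat m m" "g \<in> carrier_mat m m"
  shows "slot_elem m n s h * slot_elem m n s g = slot_elem m n s (h * g)"
proof -
  have "slot_elem m n s h * slot_elem m n s g =
    wr_elem m n (id \<circ> id) (\<lambda>x. (if id x = s then h else 1\<^sub>m m) * (if x = s then g else 1\<^sub>m m))"
    unfolding slot_elem_def by (rule wr_mult) (use assms in auto)
  also have "\<dots> = slot_elem m n s (h * g)"
    unfolding slot_elem_def by (rule wr_cong) auto
  finally show ?thesis .
qed

lemma slot_one: "slot_elem m n s (1\<^sub>m m) = 1\<^sub>m (m*n)"
  unfolding slot_elem_def using wr_one[of m n] by (simp add: if_distrib cong: if_cong)

lemma slot_inv:
  assumes "h \<in> carrier_mat m m" "g \<in> carrier_mat m m" "h * g = 1\<^sub>m m" "g * h = 1\<^sub>m m"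
  shows "slot_elem m n s h * slot_elem m n s g = 1\<^sub>m (m*n)" "slot_elem m n s g * slot_elem m n s h = 1\<^sub>m (m*n)"
  using slot_mult[OF assms(1,2)] slot_mult[OF assms(2,1)] assms by (auto simp: slot_one)

lemma perm_mult:
  assumes "\<forall>x<n. \<tau> x < n"
  shows "perm_elem m n \<sigma> * perm_elem m n \<tau> = perm_elem m n (\<sigma> \<circ> \<tau>)"
  unfolding perm_elem_def by (subst wr_mult) (use assms in auto)

lemma perm_id: "perm_elem m n id = 1\<^sub>m (m*n)"
  unfolding perm_elem_def by (rule wr_one)

lemma trans_inv:
  assumes "a < n" "b < n"
  shows "perm_elem m n (transpose a b) * perm_elem m n (transpose a b) = 1\<^sub>m (m*n)"
  using assms by (subst perm_mult) (auto simp: transpose_def perm_id)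

lemma cyc_inv:
  assumes "j \<le> l" "l < n"
  shows "perm_elem m n (cyc j l) * perm_elem m n (cycinv j l) = 1\<^sub>m (m*n)"
        "perm_elem m n (cycinv j l) * perm_elem m n (cyc j l) = 1\<^sub>m (m*n)"
proof -
  have "cyc j l \<circ> cycinv j l = id" "cycinv j l \<circ> cyc j l = id"
    using assms by (auto simp: cyc_cycinv cycinv_cyc)
  then show "perm_elem m n (cyc j l) * perm_elem m n (cycinv j l) = 1\<^sub>m (m*n)"
        "perm_elem m n (cycinv j l) * perm_elem m n (cyc j l) = 1\<^sub>m (m*n)"
    using assms by (auto simp: perm_mult cyc_lt cycinv_lt perm_id)
qed

lemma invs_single: "b \<in> mat_invs d X \<Longrightarrow> \<exists>a\<in>X. b \<in> mat_invs d {a}"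
  unfolding mat_invs_def by auto

lemma conj_slot_slot:
  assumes "s \<noteq> t" "g \<in> carrier_mat m m" "g' \<in> carrier_mat m m" "h \<in> carrier_mat m m" "g' * g = 1\<^sub>m m"
  shows "slot_elem m n s g' * slot_elem m n t h * slot_elem m n s g = slot_elem m n t h"
  unfolding slot_elem_def
  by (subst wr3) (use assms in \<open>auto intro!: wr_cong\<close>)

lemma conj_slot_perm:
  assumes "a < n" "b < n" "s \<noteq> a" "s \<noteq> b" "g \<in> carrier_mat m m" "g' \<in> carrier_mat m m" "g' * g = 1\<^sub>m m"
  shows "slot_elem m n s g' * perm_elem m n (transpose a b) * slot_elem m n s g = perm_elem m n (transpose a b)"
  unfolding slot_elem_def perm_elem_def
  by (subst wr3) (use assms in \<open>auto intro!: wr_cong simp: transpose_def\<close>)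

lemma conj_perm_slot:
  assumes "j \<le> l" "l < n" "\<forall>x<n. (cyc j l x = 0) = (x = s)" "h \<in> carrier_mat m m"
  shows "perm_elem m n (cycinv j l) * slot_elem m n 0 h * perm_elem m n (cyc j l) = slot_elem m n s h"
  unfolding slot_elem_def perm_elem_def
  by (subst wr3) (use assms in \<open>auto intro!: wr_cong simp: cyc_lt cycinv_cyc\<close>)

lemma conj_perm_perm:
  assumes "j \<le> l" "l < n" "\<forall>x<n. t x < n" "\<forall>x<n. cycinv j l (t (cyc j l x)) = t' x"
  shows "perm_elem m n (cycinv j l) * perm_elem m n t * perm_elem m n (cyc j l) = perm_elem m n t'"
  unfolding perm_elem_def
  by (subst wr3) (use assms in \<open>auto intro!: wr_cong simp: cyc_lt\<close>)

context
  fixes m n :: nat and H XH :: "complex mat set"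
  assumes Hc: "\<forall>h\<in>H. h \<in> carrier_mat m m"
   and Hm: "\<forall>a\<in>H. \<forall>b\<in>H. a*b \<in> H"
   and Hi: "\<forall>h\<in>H. \<exists>h'\<in>H. h*h' = 1\<^sub>m m \<and> h'*h = 1\<^sub>m m"
   and XH: "XH \<subseteq> H"
begin

lemma slot_invs: "h \<in> H \<Longrightarrow> b \<in> mat_invs (m*n) {slot_elem m n s h} \<Longrightarrow> \<exists>h'\<in>H. b = slot_elem m n s h'"
proof -
  assume h: "h \<in> H" and b: "b \<in> mat_invs (m*n) {slot_elem m n s h}"
  obtain h' where h': "h' \<in> H" "h*h' = 1\<^sub>m m" "h'*h = 1\<^sub>m m" using Hi h by blast
  have "b = slot_elem m n s h'"
    by (rule invs_unique[OF _ _ _ _ b]) (use slot_inv[of h m h' n s] h h' Hc in \<open>auto simp: slot_elem_def\<close>)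
  then show ?thesis using h' by blast
qed

lemma slotH_elem: "b \<in> {slot_elem m n s h | h. h \<in> H} \<union> mat_invs (m*n) {slot_elem m n s h | h. h \<in> H} \<Longrightarrow> \<exists>h'\<in>H. b = slot_elem m n s h'"
  using slot_invs invs_single[of b "m*n" "{slot_elem m n s h | h. h \<in> H}"] by blast

lemma Xgen_elem:
  assumes "1 \<le> k" "(k+1) div 2 \<le> n" "b \<in> Xgen m n XH k \<union> mat_invs (m*n) (Xgen m n XH k)"
  shows "(\<exists>h. h \<in> XH \<and> b = slot_elem m n 0 h) \<or>
    (\<exists>h h'. h \<in> XH \<and> h' \<in> H \<and> b \<in> mat_invs (m*n) {slot_elem m n 0 h} \<and> b = slot_elem m n 0 h') \<or>
    (\<exists>i. 1 \<le> i \<and> i \<le> (k+1) div 2 - 1 \<and> b = perm_elem m n (transpose (i-1) i))"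
proof -
  let ?l = "(k+1) div 2"
  have X: "Xgen m n XH k = {slot_elem m n 0 h | h. h \<in> XH} \<union> {perm_elem m n (transpose (i - 1) i) | i. 1 \<le> i \<and> i \<le> ?l - 1}"
    using assms(1) by (simp add: Xgen_def Let_def)
  show ?thesis
  proof (cases "b \<in> Xgen m n XH k")
    case True then show ?thesis unfolding X by blast
  next
    case False
    then have "b \<in> mat_invs (m*n) (Xgen m n XH k)" using assms(3) by blast
    then obtain a where a: "a \<in> Xgen m n XH k" "b \<in> mat_invs (m*n) {a}" using invs_single by blast
    show ?thesis
    proof (cases "a \<in> {slot_elem m n 0 h | h. h \<in> XH}")
      case True
      then obtain h where h: "h \<in> XH" "a = slot_elem m n 0 h" by blast
      then obtain h' where "h' \<in> H" "b = slot_elem m n 0 h'" using slot_invs a XH by blast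
      then show ?thesis using h a by blast
    next
      case False
      then obtain i where i: "1 \<le> i" "i \<le> ?l - 1" "a = perm_elem m n (transpose (i - 1) i)" using a X by blast
      have "i < n" using i assms by linarith
      then have "b = perm_elem m n (transpose (i - 1) i)"
        using invs_unique[of a "m*n" a b] a(2) trans_inv[of "i-1" n i m] i
        by (auto simp: perm_elem_def)
      then show ?thesis using i by blast
    qed
  qed
qed

lemma ECP_one: "ECP (m*n) (CLset m n H 1) (Xgen_full m n H XH 0) (Xgen_full m n H XH 1)"
proof -
  have XK: "Xgen_full m n H XH 1 = {slot_elem m n 0 h | h. h \<in> XH}"
    by (simp add: Xgen_full_def Xgen_def)
  have XP: "Xgen_full m n H XH 0 = {}" by (simp add: Xgen_full_def Xgen_def)
  have CL: "CLset m n H 1 = {wr_elem m n id g | g. \<forall>i<n. if i = 0 then g i \<in> H else g i = 1\<^sub>m m}"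
    by (simp add: CLset_def Gsub_def lessThan_Suc)
  show ?thesis unfolding ECP_def
  proof (intro ballI disjI1)
    fix b c assume b: "b \<in> Xgen_full m n H XH 1 \<union> mat_invs (m * n) (Xgen_full m n H XH 1)"
      and c: "c \<in> CLset m n H 1"
    have "b \<in> {slot_elem m n 0 h | h. h \<in> H} \<union> mat_invs (m*n) {slot_elem m n 0 h | h. h \<in> H}"
      using b XH invs_mono[of "{slot_elem m n 0 h | h. h \<in> XH}" "{slot_elem m n 0 h | h. h \<in> H}" "m*n"]
      unfolding XK by blast
    then obtain h where h: "h \<in> H" "b = slot_elem m n 0 h" using slotH_elem by blast
    obtain g where g: "c = wr_elem m n id g" "\<forall>i<n. if i = 0 then g i \<in> H else g i = 1\<^sub>m m"
      using c CL by blast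
    have gc: "\<forall>x<n. g x \<in> carrier_mat m m" using g(2) Hc by (metis one_carrier_mat)
    have "b * c = wr_elem m n (id \<circ> id) (\<lambda>x. (if id x = 0 then h else 1\<^sub>m m) * g x)"
      unfolding h g slot_elem_def by (rule wr_mult) (use gc h Hc in auto)
    then have bc: "b * c = wr_elem m n id (\<lambda>x. (if id x = 0 then h else 1\<^sub>m m) * g x)" by simp
    moreover have "\<forall>i<n. if i = 0 then (if id i = 0 then h else 1\<^sub>m m) * g i \<in> H
        else (if id i = 0 then h else 1\<^sub>m m) * g i = 1\<^sub>m m"
      using g(2) h Hm by auto
    then show "b * c \<in> CLset m n H 1" unfolding CL using bc by blast
  qed
qed

lemma ECP_even:
  assumes l: "1 \<le> l" "l < n"
  shows "ECP (m*n) (CLset m n H (2*l)) (Xgen_full m n H XH (2*l-1)) (Xgen_full m n H XH (2*l))"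
proof -
  let ?S = "{slot_elem m n l h | h. h \<in> H}"
  have CL: "CLset m n H (2*l) = ?S" using l by (simp add: CLset_def)
  have XX: "Xgen m n XH (2*l-1) = Xgen m n XH (2*l)" using l by (simp add: Xgen_def)
  have XP: "Xgen_full m n H XH (2*l-1) = Xgen m n XH (2*l)" using l XX by (simp add: Xgen_full_def)
  have XK: "Xgen_full m n H XH (2*l) = Xgen m n XH (2*l) \<union> ?S" using l by (simp add: Xgen_full_def)
  show ?thesis unfolding ECP_def
  proof (intro ballI)
    fix b c assume b: "b \<in> Xgen_full m n H XH (2*l) \<union> mat_invs (m * n) (Xgen_full m n H XH (2*l))"
      and c: "c \<in> CLset m n H (2*l)"
    obtain g where g: "g \<in> H" "c = slot_elem m n l g" using c CL by blast
    obtain g' where g': "g' \<in> H" "g*g' = 1\<^sub>m m" "g'*g = 1\<^sub>m m" using Hi g by blast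
    have gc: "g \<in> carrier_mat m m" "g' \<in> carrier_mat m m" using g g' Hc by auto
    have ci: "slot_elem m n l g' \<in> mat_invs (m*n) {c}"
      by (rule invsI) (use slot_inv[OF gc g'(2,3), of n l] g in \<open>auto simp: slot_elem_def\<close>)
    show "b * c \<in> CLset m n H (2*l) \<or>
         (\<exists>ci\<in>mat_invs (m * n) {c}. ci * b * c \<in> Xgen_full m n H XH (2*l-1) \<union> mat_invs (m * n) (Xgen_full m n H XH (2*l-1)))"
    proof (cases "b \<in> ?S \<union> mat_invs (m*n) ?S")
      case True
      then obtain h where h: "h \<in> H" "b = slot_elem m n l h" using slotH_elem by blast
      have "b * c = slot_elem m n l (h * g)" using h g slot_mult[of h m g n l] Hc by auto
      then show ?thesis using CL h g Hm by auto
    next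
      case False
      then have bX: "b \<in> Xgen m n XH (2*l) \<union> mat_invs (m*n) (Xgen m n XH (2*l))"
        using b unfolding XK invs_Un by blast
      have D: "(\<exists>h. h \<in> XH \<and> b = slot_elem m n 0 h) \<or>
        (\<exists>h h'. h \<in> XH \<and> h' \<in> H \<and> b \<in> mat_invs (m*n) {slot_elem m n 0 h} \<and> b = slot_elem m n 0 h') \<or>
        (\<exists>i. 1 \<le> i \<and> i \<le> (2*l+1) div 2 - 1 \<and> b = perm_elem m n (transpose (i-1) i))"
        by (rule Xgen_elem) (use bX l in auto)
      have "slot_elem m n l g' * b * c = b"
        using D
      proof (elim disjE exE conjE)
        fix h assume h: "h \<in> XH" "b = slot_elem m n 0 h"
        show ?thesis unfolding h g by (rule conj_slot_slot) (use l gc g' h XH Hc in auto)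
      next
        fix h h' assume h: "h' \<in> H" "b = slot_elem m n 0 h'"
        show ?thesis unfolding h(2) g by (rule conj_slot_slot) (use l gc g' h Hc in auto)
      next
        fix i assume i: "1 \<le> i" "i \<le> (2*l+1) div 2 - 1" "b = perm_elem m n (transpose (i-1) i)"
        show ?thesis unfolding i(3) g by (rule conj_slot_perm) (use l gc g' i in auto)
      qed
      then show ?thesis using ci bX XP by (intro disjI2 bexI[OF _ ci]) auto
    qed
  qed
qed

lemma ECP_odd:
  assumes l: "1 \<le> l" "l < n"
  shows "ECP (m*n) (CLset m n H (2*l+1)) (Xgen_full m n H XH (2*l)) (Xgen_full m n H XH (2*l+1))"
proof -
  let ?S = "{slot_elem m n l h | h. h \<in> H}"
  let ?XP = "Xgen_full m n H XH (2*l)"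
  have CL: "CLset m n H (2*l+1) = {perm_elem m n (cyc j l) | j. j \<le> l}" using l by (simp add: CLset_def)
  have XP: "?XP = Xgen m n XH (2*l) \<union> ?S" using l by (simp add: Xgen_full_def)
  have XK: "Xgen_full m n H XH (2*l+1) = Xgen m n XH (2*l+1)" by (simp add: Xgen_full_def)
  have Xs: "slot_elem m n 0 h \<in> ?XP" if "h \<in> XH" for h
    using that l unfolding XP by (auto simp: Xgen_def Let_def)
  have Xt: "perm_elem m n (transpose (i-1) i) \<in> ?XP" if "1 \<le> i" "i \<le> l - 1" for i
    using that l unfolding XP by (auto simp: Xgen_def Let_def)
  have XS: "slot_elem m n l h \<in> ?XP" if "h \<in> H" for h
    using that unfolding XP by auto
  show ?thesis unfolding ECP_def
  proof (intro ballI)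
    fix b c assume b: "b \<in> Xgen_full m n H XH (2*l+1) \<union> mat_invs (m * n) (Xgen_full m n H XH (2*l+1))"
      and c: "c \<in> CLset m n H (2*l+1)"
    obtain j where j: "j \<le> l" "c = perm_elem m n (cyc j l)" using c CL by blast
    have ci: "perm_elem m n (cycinv j l) \<in> mat_invs (m*n) {c}"
      by (rule invsI) (use cyc_inv[OF j(1) l(2), of m] j in \<open>auto simp: perm_elem_def\<close>)
    have D: "(\<exists>h. h \<in> XH \<and> b = slot_elem m n 0 h) \<or>
        (\<exists>h h'. h \<in> XH \<and> h' \<in> H \<and> b \<in> mat_invs (m*n) {slot_elem m n 0 h} \<and> b = slot_elem m n 0 h') \<or>
        (\<exists>i. 1 \<le> i \<and> i \<le> (2*l+1+1) div 2 - 1 \<and> b = perm_elem m n (transpose (i-1) i))"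
      by (rule Xgen_elem) (use b l XK in auto)
    let ?ci = "perm_elem m n (cycinv j l)"
    have slotcase: "b * c \<in> CLset m n H (2*l+1) \<or> (\<exists>ci\<in>mat_invs (m * n) {c}. ci * b * c \<in> ?XP \<union> mat_invs (m * n) ?XP)"
      if h0: "h0 \<in> H" "b = slot_elem m n 0 h0" and bP: "b \<in> ?XP \<union> mat_invs (m*n) ?XP" for h0
    proof (cases "j = 0")
      case True
      have "?ci * b * c = slot_elem m n l h0"
        unfolding h0 j by (rule conj_perm_slot) (use l True pt_0 h0 Hc in auto)
      then show ?thesis using XS[OF h0(1)] ci by (intro disjI2 bexI[OF _ ci]) auto
    next
      case False
      have "?ci * b * c = slot_elem m n 0 h0"
        unfolding h0 j by (rule conj_perm_slot) (use l j False pt_0j h0 Hc in auto)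
      then show ?thesis using bP h0 ci by (intro disjI2 bexI[OF _ ci]) auto
    qed
    have tl: "\<forall>x<n. transpose a b' x < n" if "a < n" "b' < n" for a b'
      using that by (auto simp: transpose_def)
    show "b * c \<in> CLset m n H (2*l+1) \<or> (\<exists>ci\<in>mat_invs (m * n) {c}. ci * b * c \<in> ?XP \<union> mat_invs (m * n) ?XP)"
      using D
    proof (elim disjE exE conjE)
      fix h assume h: "h \<in> XH" "b = slot_elem m n 0 h"
      show ?thesis by (rule slotcase[of h]) (use h XH Xs in auto)
    next
      fix h h' assume h: "h \<in> XH" "h' \<in> H" "b \<in> mat_invs (m*n) {slot_elem m n 0 h}" "b = slot_elem m n 0 h'"
      have "b \<in> mat_invs (m*n) ?XP" using h(3) invs_mono[of "{slot_elem m n 0 h}" ?XP "m*n"] Xs[OF h(1)] by auto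
      then show ?thesis by (intro slotcase[of h']) (use h in auto)
    next
      fix i assume i: "1 \<le> i" "i \<le> (2*l+1+1) div 2 - 1" "b = perm_elem m n (transpose (i-1) i)"
      have il: "i \<le> l" using i by simp
      have tln: "\<forall>x<n. transpose (i-1) i x < n" using tl il l by auto
      consider "i = j" | "i = j + 1" | "i < j" | "j + 2 \<le> i" by linarith
      then show ?thesis
      proof cases
        case 1
        have "b * c = perm_elem m n (transpose (i-1) i \<circ> cyc j l)"
          unfolding i(3) j by (rule perm_mult) (use cyc_lt j l in auto)
        also have "\<dots> = perm_elem m n (cyc (j-1) l)"
          unfolding perm_elem_def by (rule wr_cong) (use pt_jj 1 i j in auto)
        finally have "b * c \<in> CLset m n H (2*l+1)" unfolding CL using j(1) by (auto intro!: exI[of _ "j-1"])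
        then show ?thesis ..
      next
        case 2
        have "b * c = perm_elem m n (transpose j (j+1) \<circ> cyc j l)"
          unfolding i(3) j using 2 by simp (rule perm_mult, use cyc_lt j l in auto)
        also have "\<dots> = perm_elem m n (cyc (j+1) l)"
          unfolding perm_elem_def by (rule wr_cong) (use pt_j1 2 il in auto)
        finally show ?thesis unfolding CL using 2 il by auto
      next
        case 3
        have "?ci * b * c = perm_elem m n (transpose (i-1) i)"
          unfolding i(3) j by (rule conj_perm_perm) (use j l tln pt_lt 3 i in auto)
        then show ?thesis using Xt[of i] i 3 j ci by (intro disjI2 bexI[OF _ ci]) auto
      next
        case 4
        have "?ci * b * c = perm_elem m n (transpose (i-1-1) (i-1))"
          unfolding i(3) j by (rule conj_perm_perm) (use j l tln pt_gt 4 il in \<open>auto simp: numeral_2_eq_2\<close>)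
        then show ?thesis using Xt[of "i-1"] i 4 il ci by (intro disjI2 bexI[OF _ ci]) auto
      qed
    qed
  qed
qed

end


theorem mainTheorem9:
  fixes m n :: nat and H XH :: "complex mat set"
    and v0 :: "complex vec" and u :: "nat \<Rightarrow> real"
  assumes "m \<ge> 1" and "n \<ge> 1"
    and "finite_unitary_group m H"
    and "XH \<subseteq> H" and "mat_gen m XH = H"
    and "v0 \<in> carrier_vec m" and "(\<Sum>i<m. (cmod (v0 $ i))\<^sup>2) = 1"
    and "\<forall>h\<in>H. h *\<^sub>v v0 = v0 \<longrightarrow> h = 1\<^sub>m m"
    and "0 < u 0" and "\<forall>i j. i < j \<and> j < n \<longrightarrow> u i < u j"
    and "(\<Sum>i<n. (u i)\<^sup>2) = 1"
  shows "\<forall>k. 1 \<le> k \<and> k \<le> 2 * n - 1 \<longrightarrow>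
           ECP (m * n) (CLset m n H k) (Xgen_full m n H XH (k - 1)) (Xgen_full m n H XH k)"
proof (intro allI impI)
  fix k assume k: "1 \<le> k \<and> k \<le> 2 * n - 1"
  have G: "finite_unitary_group m H" by fact
  have Hc: "\<forall>h\<in>H. h \<in> carrier_mat m m" using G by (auto simp: finite_unitary_group_def unitary_mat_def)
  have Hm: "\<forall>a\<in>H. \<forall>b\<in>H. a*b \<in> H" using G by (auto simp: finite_unitary_group_def)
  have Hi: "\<forall>h\<in>H. \<exists>h'\<in>H. h*h' = 1\<^sub>m m \<and> h'*h = 1\<^sub>m m"
  proof
    fix h assume h: "h \<in> H"
    have hc: "h \<in> carrier_mat m m" and hu: "h * mat_adjoint h = 1\<^sub>m m"
      using G h by (auto simp: finite_unitary_group_def unitary_mat_def)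
    have ac: "mat_adjoint h \<in> carrier_mat m m" using hc by (auto simp: mat_adjoint_def)
    have hu2: "mat_adjoint h * h = 1\<^sub>m m" by (rule mat_mult_left_right_inverse[OF hc ac hu])
    have "mat_adjoint h \<in> mat_invs m H" unfolding mat_invs_def using ac hu hu2 h by auto
    then have "mat_adjoint h \<in> H" using G by (auto simp: finite_unitary_group_def)
    then show "\<exists>h'\<in>H. h*h' = 1\<^sub>m m \<and> h'*h = 1\<^sub>m m" using hu hu2 by blast
  qed
  have XH: "XH \<subseteq> H" by fact
  show "ECP (m * n) (CLset m n H k) (Xgen_full m n H XH (k - 1)) (Xgen_full m n H XH k)"
  proof (cases "k = 1")
    case True then show ?thesis using ECP_one[OF Hc Hm Hi XH] by simp
  next
    case False
    show ?thesis
    proof (cases "even k")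
      case True
      define l where "l = k div 2"
      have kl: "k = 2*l" using True l_def by simp
      have "1 \<le> l" "l < n" using k False kl by auto
      then show ?thesis using ECP_even[OF Hc Hm Hi XH, of l] kl by simp
    next
      case odd: False
      define l where "l = k div 2"
      have kl: "k = 2*l+1" using odd l_def by simp
      have "1 \<le> l" "l < n" using k False kl by auto
      then show ?thesis using ECP_odd[OF Hc Hm Hi XH, of l] kl by simp
    qed
  qed
qed

end
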